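(* Let $A\subseteq V$ and $O_A$ an operator on the physical sites of $A$. For $\lambda\in\mathbb C$ let $\mathcal Z^A_\lambda$ be the network for $\langle\psi|e^{\lambda O_A}|\psi\rangle$, expanded with the (fixed, $\lambda$-independent) BP messages of the norm network, with weights $Z_l(\lambda):=\tilde Z^{A,\lambda}_{E(l)}/Z^{A,\lambda}_{BP}$ for $l\in\mathcal L_A$. Assume that for $\lambda$ in a neighborhood of $0$, $Z^{A,\lambda}_{BP}\ne0$ and $\log\mathcal Z^A_\lambda=\log Z^{A,\lambda}_{BP}+\sum_{\mathbf W\text{ connected over }\mathcal L_A}\phi(\mathbf W)\prod_i Z_{l_i}(\lambda)^{\eta_i}$ holds with a series that may be differentiated term by term at $\lambda=0$. Then $$\langle O_A\rangle=\partial_\lambda\log\mathcal Z^A_\lambda\big|_{\lambda=0}=\langle O_A\rangle_{BP}+\sum_{\substack{\mathbf W\text{ connected over }\mathcal L_A\\ \mathrm{supp}(\mathbf W)\cap A\ne\emptyset}}\phi(\mathbf W)\sum_{l\in\mathbf W_A}\eta_l\Big[\bar Z^A_l\,Z_l^{\eta_l-1}\!\!\prod_{l'\in\mathbf W,\,l'\neq l}\!\!Z_{l'}^{\eta_{l'}}-Z_{\mathbf W}\langle O_A\rangle_{BP}\Big],$$ where $\mathbf W_A$ is the set of distinct elements of the cluster $\mathbf W$ whose support intersects $A$, $\eta_l$ is the multiplicity of $l$ in $\mathbf W$, and $Z_l^{0}:=1$.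
   Context: Let $|\psi\rangle$ be a PEPS on a finite graph $G=(V,E)$; $\mathcal Z=\langle\psi|\psi\rangle>0$ is the norm network (vertex tensors = ket tensor contracted with its conjugate over the physical index), and $\mathcal Z^A$ the network for $\langle\psi|O_A|\psi\rangle$ (operator inserted at the sites of $A$, same tensors elsewhere); $\langle O_A\rangle=\mathcal Z^A/\mathcal Z$. Fix a BP fixed point of $\mathcal Z$: messages $\mu_{v\to w}$ with $I_{vw}=\mu_{v\to w}\star\mu_{w\to v}\ne0$, such that each vertex tensor contracted with all incoming messages except from $w$ is proportional to $\mu_{v\to w}$; the same messages are used for all networks. $\mathcal P^\perp_{vw}=\mathbb 1-\mu_{v\to w}\otimes\mu_{w\to v}/I_{vw}$. For a network $\mathcal Y$ and $F\subseteq E$, the excitation contraction of $\mathcal Y$ on $F$ replaces the identity on edges in $F$ by $\mathcal P^\perp$ and on other edges by $\mu\otimes\mu/I$; write $\tilde Z_F,\tilde Z^A_F,\tilde Z^{A,\lambda}_F$ for $\mathcal Y=\mathcal Z,\mathcal Z^A,\mathcal Z^A_\lambda$, and $Z_{BP}=\tilde Z_\emptyset$ (nonzero), $Z^A_{BP}=\tilde Z^A_\emptyset$, $Z^{A,\lambda}_{BP}=\tilde Z^{A,\lambda}_\emptyset$, $\langle O_A\rangle_{BP}=Z^A_{BP}/Z_{BP}$. $\mathcal L_A$: connected subgraphs of $G$ with at least one edge in which every vertex outside $A$ has degree $\ge2$; $\mathrm{supp}(l)$ = vertex set. Weights: $Z_l:=\tilde Z_{E(l)}/Z_{BP}$ and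 $\bar Z^A_l:=\tilde Z^A_{E(l)}/Z_{BP}$ (normalized by the norm network's BP value). Compatible = vertex-disjoint. A cluster $\mathbf W=\{(l_i,\eta_i)\}$ is a finite multiset of distinct elements of $\mathcal L_A$ with multiplicities $\eta_i\ge1$, $Z_{\mathbf W}=\prod Z_{l_i}^{\eta_i}$, $\mathrm{supp}(\mathbf W)=\bigcup\mathrm{supp}(l_i)$; interaction graph: $\eta_i$ vertices per $l_i$, adjacent iff equal or incompatible; connected if it is connected. Ursell function $\phi(\mathbf W)=\frac1{\prod\eta_i!}\sum_C(-1)^{|E(C)|}$ over connected spanning subgraphs $C$ of the interaction graph. *)

theory Defs
  imports "HOL-Analysis.Analysis" "HOL-Library.Multiset"
begin

text \<open>The graph is G = (V,E) with vertex type 'v (linearly ordered, used only to orient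
  each edge e = {Min e, Max e}); edges are 2-element subsets of V.  D e is the bond
  dimension of edge e (virtual ket index ranges over {..<D e}), d v the physical dimension
  at v.  Ket tensors: Aten v s alpha, where s < d v is the physical index and alpha assigns
  to each edge incident to v a virtual index.\<close>

definition inc :: "'v set set \<Rightarrow> 'v \<Rightarrow> 'v set set" where
  "inc E v = {e \<in> E. v \<in> e}"

definition half_edges :: "'v set set \<Rightarrow> ('v \<times> 'v set) set" where
  "half_edges E = {(v, e). e \<in> E \<and> v \<in> e}"

definition bond_cfgs :: "'v set set \<Rightarrow> ('v set \<Rightarrow> nat) \<Rightarrow> 'v \<Rightarrow> ('v set \<Rightarrow> nat) set" where
  "bond_cfgs E D v = PiE (inc E v) (\<lambda>e. {..<D e})"

definition half_cfgs :: "'v set set \<Rightarrow> ('v set \<Rightarrow> nat) \<Rightarrow> ('v \<times> 'v set \<Rightarrow> nat) set" where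
  "half_cfgs E D = PiE (half_edges E) (\<lambda>(v, e). {..<D e})"

definition phys_cfgs :: "'v set \<Rightarrow> ('v \<Rightarrow> nat) \<Rightarrow> ('v \<Rightarrow> nat) set" where
  "phys_cfgs S d = PiE S (\<lambda>v. {..<d v})"

text \<open>Index space of an edge of the norm network (ket index, bra index).\<close>
definition edge_dom :: "('v set \<Rightarrow> nat) \<Rightarrow> 'v set \<Rightarrow> (nat \<times> nat) set" where
  "edge_dom D e = {..<D e} \<times> {..<D e}"

text \<open>An operator on the sites of S is a matrix X sigma' sigma = <sigma'|X|sigma>, indexed by
  physical configurations on S (elements of phys_cfgs S d).\<close>

definition op_id :: "('v \<Rightarrow> nat) \<Rightarrow> ('v \<Rightarrow> nat) \<Rightarrow> complex" where
  "op_id \<sigma>' \<sigma> = (if \<sigma>' = \<sigma> then 1 else 0)"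

definition op_mult ::
  "'v set \<Rightarrow> ('v \<Rightarrow> nat) \<Rightarrow> (('v \<Rightarrow> nat) \<Rightarrow> ('v \<Rightarrow> nat) \<Rightarrow> complex)
     \<Rightarrow> (('v \<Rightarrow> nat) \<Rightarrow> ('v \<Rightarrow> nat) \<Rightarrow> complex) \<Rightarrow> ('v \<Rightarrow> nat) \<Rightarrow> ('v \<Rightarrow> nat) \<Rightarrow> complex" where
  "op_mult S d P Q \<sigma>' \<sigma> = (\<Sum>\<tau>\<in>phys_cfgs S d. P \<sigma>' \<tau> * Q \<tau> \<sigma>)"

primrec op_pow ::
  "'v set \<Rightarrow> ('v \<Rightarrow> nat) \<Rightarrow> (('v \<Rightarrow> nat) \<Rightarrow> ('v \<Rightarrow> nat) \<Rightarrow> complex) \<Rightarrow> nat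
     \<Rightarrow> ('v \<Rightarrow> nat) \<Rightarrow> ('v \<Rightarrow> nat) \<Rightarrow> complex" where
  "op_pow S d P 0 = op_id"
| "op_pow S d P (Suc n) = op_mult S d (op_pow S d P n) P"

definition op_exp ::
  "'v set \<Rightarrow> ('v \<Rightarrow> nat) \<Rightarrow> complex \<Rightarrow> (('v \<Rightarrow> nat) \<Rightarrow> ('v \<Rightarrow> nat) \<Rightarrow> complex)
     \<Rightarrow> ('v \<Rightarrow> nat) \<Rightarrow> ('v \<Rightarrow> nat) \<Rightarrow> complex" where
  "op_exp S d lam P \<sigma>' \<sigma> = (\<Sum>n. lam ^ n / fact n * op_pow S d P n \<sigma>' \<sigma>)"

text \<open>S X M is the network <psi|X|psi> (X acting on the sites of S, identity
  elsewhere, i.e. ket and bra physical indices identified outside S), where the identity on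
  each edge e is replaced by the matrix M e; its first argument is the (ket,bra) index pair
  at the end Min e, its second the pair at the end Max e.\<close>

definition ident_mat :: "'v set \<Rightarrow> nat \<times> nat \<Rightarrow> nat \<times> nat \<Rightarrow> complex" where
  "ident_mat e i j = (if i = j then 1 else 0)"

definition contract ::
  "'v::linorder set \<Rightarrow> 'v set set \<Rightarrow> ('v set \<Rightarrow> nat) \<Rightarrow> ('v \<Rightarrow> nat)
    \<Rightarrow> ('v \<Rightarrow> nat \<Rightarrow> ('v set \<Rightarrow> nat) \<Rightarrow> complex)
    \<Rightarrow> 'v set \<Rightarrow> (('v \<Rightarrow> nat) \<Rightarrow> ('v \<Rightarrow> nat) \<Rightarrow> complex)
    \<Rightarrow> ('v set \<Rightarrow> nat \<times> nat \<Rightarrow> nat \<times> nat \<Rightarrow> complex) \<Rightarrow> complex" where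
  "contract V E D d Aten S X M =
     (\<Sum>a\<in>half_cfgs E D. \<Sum>b\<in>half_cfgs E D. \<Sum>s\<in>phys_cfgs V d. \<Sum>s'\<in>phys_cfgs V d.
        (\<Prod>v\<in>V. Aten v (s v) (restrict (\<lambda>e. a (v, e)) (inc E v))
                 * cnj (Aten v (s' v) (restrict (\<lambda>e. b (v, e)) (inc E v))))
      * (\<Prod>v\<in>V - S. if s v = s' v then 1 else 0)
      * X (restrict s' S) (restrict s S)
      * (\<Prod>e\<in>E. M e (a (Min e, e), b (Min e, e)) (a (Max e, e), b (Max e, e))))"

text \<open>The trivial operator on no sites (norm network).\<close>
definition one_op :: "('v \<Rightarrow> nat) \<Rightarrow> ('v \<Rightarrow> nat) \<Rightarrow> complex" where
  "one_op \<sigma>' \<sigma> = 1"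

text \<open>mu v w is the message mu_{v->w}, a vector on edge_dom D {v,w}.\<close>

definition Istar :: "('v set \<Rightarrow> nat) \<Rightarrow> ('v \<Rightarrow> 'v \<Rightarrow> nat \<times> nat \<Rightarrow> complex) \<Rightarrow> 'v \<Rightarrow> 'v \<Rightarrow> complex" where
  "Istar D \<mu> v w = (\<Sum>i\<in>edge_dom D {v, w}. \<mu> v w i * \<mu> w v i)"

definition Tnorm :: "('v \<Rightarrow> nat) \<Rightarrow> ('v \<Rightarrow> nat \<Rightarrow> ('v set \<Rightarrow> nat) \<Rightarrow> complex) \<Rightarrow> 'v
      \<Rightarrow> ('v set \<Rightarrow> nat) \<Rightarrow> ('v set \<Rightarrow> nat) \<Rightarrow> complex" where
  "Tnorm d Aten v \<alpha> \<beta> = (\<Sum>s<d v. Aten v s \<alpha> * cnj (Aten v s \<beta>))"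

definition BP_fixed_point ::
  "'v set \<Rightarrow> 'v set set \<Rightarrow> ('v set \<Rightarrow> nat) \<Rightarrow> ('v \<Rightarrow> nat)
    \<Rightarrow> ('v \<Rightarrow> nat \<Rightarrow> ('v set \<Rightarrow> nat) \<Rightarrow> complex) \<Rightarrow> ('v \<Rightarrow> 'v \<Rightarrow> nat \<times> nat \<Rightarrow> complex) \<Rightarrow> bool" where
  "BP_fixed_point V E D d Aten \<mu> \<longleftrightarrow>
     (\<forall>v\<in>V. \<forall>w. {v, w} \<in> E \<longrightarrow>
        (\<exists>c. \<forall>j\<in>edge_dom D {v, w}.
           (\<Sum>\<alpha>\<in>bond_cfgs E D v. \<Sum>\<beta>\<in>bond_cfgs E D v.
              if (\<alpha> {v, w}, \<beta> {v, w}) = j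
              then Tnorm d Aten v \<alpha> \<beta> *
                     (\<Prod>u\<in>{u. {u, v} \<in> E \<and> u \<noteq> w}. \<mu> u v (\<alpha> {u, v}, \<beta> {u, v}))
              else 0) = c * \<mu> v w j))"

text \<open>mu_{v->w} (x) mu_{w->v} / I_{vw} on the edge e, oriented so that the end Min e is
  fed the message coming from Max e and vice versa.\<close>
definition Pbp :: "('v::linorder set \<Rightarrow> nat) \<Rightarrow> ('v \<Rightarrow> 'v \<Rightarrow> nat \<times> nat \<Rightarrow> complex)
    \<Rightarrow> 'v set \<Rightarrow> nat \<times> nat \<Rightarrow> nat \<times> nat \<Rightarrow> complex" where
  "Pbp D \<mu> e i j = \<mu> (Max e) (Min e) i * \<mu> (Min e) (Max e) j / Istar D \<mu> (Min e) (Max e)"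

definition Pperp :: "('v::linorder set \<Rightarrow> nat) \<Rightarrow> ('v \<Rightarrow> 'v \<Rightarrow> nat \<times> nat \<Rightarrow> complex)
    \<Rightarrow> 'v set \<Rightarrow> nat \<times> nat \<Rightarrow> nat \<times> nat \<Rightarrow> complex" where
  "Pperp D \<mu> e i j = ident_mat e i j - Pbp D \<mu> e i j"

definition exc_mat :: "('v::linorder set \<Rightarrow> nat) \<Rightarrow> ('v \<Rightarrow> 'v \<Rightarrow> nat \<times> nat \<Rightarrow> complex)
    \<Rightarrow> 'v set set \<Rightarrow> 'v set \<Rightarrow> nat \<times> nat \<Rightarrow> nat \<times> nat \<Rightarrow> complex" where
  "exc_mat D \<mu> F e = (if e \<in> F then Pperp D \<mu> e else Pbp D \<mu> e)"

definition exc_contract where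
  "exc_contract V E D d Aten S X \<mu> F = contract V E D d Aten S X (exc_mat D \<mu> F)"

text \<open>An element of L_A is represented by its edge set (a connected subgraph with at least one
  edge has no isolated vertices, so it is determined by its edges); supp = vertex set.\<close>

definition supp :: "'v set set \<Rightarrow> 'v set" where
  "supp l = \<Union> l"

definition edge_connected :: "'v set set \<Rightarrow> bool" where
  "edge_connected l \<longleftrightarrow>
     (\<forall>x\<in>supp l. \<forall>y\<in>supp l. (x, y) \<in> ({(u, w). {u, w} \<in> l})\<^sup>*)"

definition LA :: "'v set set \<Rightarrow> 'v set \<Rightarrow> 'v set set set" where
  "LA E A = {l. l \<subseteq> E \<and> l \<noteq> {} \<and> edge_connected l \<and>
                (\<forall>v\<in>supp l - A. card {e\<in>l. v \<in> e} \<ge> 2)}"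

text \<open>Interaction graph of a cluster W (a multiset of loops): count W l copies of each l,
  copies adjacent iff they are distinct vertices and their loops are equal or incompatible
  (not vertex-disjoint).\<close>

definition ivert :: "'v set set multiset \<Rightarrow> ('v set set \<times> nat) set" where
  "ivert W = {(l, k). l \<in># W \<and> k < count W l}"

definition iadj :: "'v set set \<times> nat \<Rightarrow> 'v set set \<times> nat \<Rightarrow> bool" where
  "iadj x y \<longleftrightarrow> x \<noteq> y \<and> (fst x = fst y \<or> supp (fst x) \<inter> supp (fst y) \<noteq> {})"

definition iedges :: "'v set set multiset \<Rightarrow> ('v set set \<times> nat) set set" where
  "iedges W = {{x, y} | x y. x \<in> ivert W \<and> y \<in> ivert W \<and> iadj x y}"

definition graph_connected :: "'a set \<Rightarrow> 'a set set \<Rightarrow> bool" where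
  "graph_connected Vs C \<longleftrightarrow> (\<forall>x\<in>Vs. \<forall>y\<in>Vs. (x, y) \<in> ({(a, b). {a, b} \<in> C})\<^sup>*)"

definition ursell :: "'v set set multiset \<Rightarrow> real" where
  "ursell W = (1 / (\<Prod>l\<in>set_mset W. fact (count W l))) *
     (\<Sum>C\<in>{C. C \<subseteq> iedges W \<and> graph_connected (ivert W) C}. (-1) ^ card C)"

definition conn_clusters :: "'v set set \<Rightarrow> 'v set \<Rightarrow> 'v set set multiset set" where
  "conn_clusters E A = {W. W \<noteq> {#} \<and> set_mset W \<subseteq> LA E A \<and> graph_connected (ivert W) (iedges W)}"

definition cl_supp :: "'v set set multiset \<Rightarrow> 'v set" where
  "cl_supp W = (\<Union>l\<in>set_mset W. supp l)"


definition cl_weight :: "('v set set \<Rightarrow> complex) \<Rightarrow> 'v set set multiset \<Rightarrow> complex" where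
  "cl_weight w W = (\<Prod>l\<in>set_mset W. w l ^ count W l)"

definition Zl where
  "Zl V E D d Aten \<mu> l =
     exc_contract V E D d Aten {} one_op \<mu> l / exc_contract V E D d Aten {} one_op \<mu> {}"

definition Zbar where
  "Zbar V E D d Aten A Op \<mu> l =
     exc_contract V E D d Aten A Op \<mu> l / exc_contract V E D d Aten {} one_op \<mu> {}"

definition Zlam where
  "Zlam V E D d Aten A Op \<mu> lam l =
     exc_contract V E D d Aten A (op_exp A d lam Op) \<mu> l
       / exc_contract V E D d Aten A (op_exp A d lam Op) \<mu> {}"

end

theory Submission
  imports Defs
begin


lemma phys_cfgs_finite: "finite S \<Longrightarrow> finite (phys_cfgs S d)"
  unfolding phys_cfgs_def by (intro finite_PiE) auto

lemma op_pow_bound: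
  assumes "finite A"
  shows "\<exists>K\<ge>1. \<forall>n. \<forall>\<tau>\<in>phys_cfgs A d \<union> {\<sigma>}. cmod (op_pow A d Op n \<sigma>' \<tau>) \<le> K ^ n"
proof -
  define P where "P = phys_cfgs A d"
  have fP: "finite P" using assms by (simp add: P_def phys_cfgs_finite)
  define K where "K = 1 + (\<Sum>\<rho>\<in>P. \<Sum>\<tau>\<in>P \<union> {\<sigma>}. cmod (Op \<rho> \<tau>))"
  have K1: "K \<ge> 1" unfolding K_def by (intro add_increasing2 sum_nonneg) auto
  have "\<forall>\<tau>\<in>P \<union> {\<sigma>}. cmod (op_pow A d Op n \<sigma>' \<tau>) \<le> K ^ n" for n
  proof (induction n)
    case 0
    then show ?case by (auto simp: op_id_def)
  next
    case (Suc n)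
    show ?case
    proof
      fix \<tau> assume t: "\<tau> \<in> P \<union> {\<sigma>}"
      have "cmod (op_pow A d Op (Suc n) \<sigma>' \<tau>) = cmod (\<Sum>\<rho>\<in>P. op_pow A d Op n \<sigma>' \<rho> * Op \<rho> \<tau>)"
        by (simp add: op_mult_def P_def)
      also have "\<dots> \<le> (\<Sum>\<rho>\<in>P. cmod (op_pow A d Op n \<sigma>' \<rho>) * cmod (Op \<rho> \<tau>))"
        by (rule order_trans[OF norm_sum]) (simp add: norm_mult)
      also have "\<dots> \<le> (\<Sum>\<rho>\<in>P. K ^ n * cmod (Op \<rho> \<tau>))"
        using Suc.IH by (intro sum_mono mult_right_mono) auto
      also have "\<dots> = K ^ n * (\<Sum>\<rho>\<in>P. cmod (Op \<rho> \<tau>))" by (simp add: sum_distrib_left)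
      also have "(\<Sum>\<rho>\<in>P. cmod (Op \<rho> \<tau>)) \<le> (\<Sum>\<rho>\<in>P. \<Sum>\<tau>'\<in>P \<union> {\<sigma>}. cmod (Op \<rho> \<tau>'))"
        using t fP by (intro sum_mono member_le_sum) auto
      hence "K ^ n * (\<Sum>\<rho>\<in>P. cmod (Op \<rho> \<tau>)) \<le> K ^ n * K"
        using K1 unfolding K_def by (intro mult_left_mono) auto
      finally show "cmod (op_pow A d Op (Suc n) \<sigma>' \<tau>) \<le> K ^ Suc n" by (simp add: mult.commute)
    qed
  qed
  thus ?thesis using K1 unfolding P_def by blast
qed

lemma op_exp_deriv:
  assumes "finite A" "\<sigma>' \<in> phys_cfgs A d"
  shows "((\<lambda>lam. op_exp A d lam Op \<sigma>' \<sigma>) has_field_derivative Op \<sigma>' \<sigma>) (at 0)"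
    and "op_exp A d 0 Op \<sigma>' \<sigma> = op_id \<sigma>' \<sigma>"
proof -
  define c where "c n = op_pow A d Op n \<sigma>' \<sigma> / fact n" for n
  have eq: "op_exp A d lam Op \<sigma>' \<sigma> = (\<Sum>n. c n * lam ^ n)" for lam
    unfolding op_exp_def c_def by (intro suminf_cong) simp
  obtain K where K: "K \<ge> 1" "\<And>n. cmod (op_pow A d Op n \<sigma>' \<sigma>) \<le> K ^ n"
    using op_pow_bound[OF assms(1), where d=d and Op=Op and \<sigma>=\<sigma> and \<sigma>'=\<sigma>'] by blast
  have summ: "summable (\<lambda>n. c n * y ^ n)" for y
  proof (rule summable_comparison_test')
    show "summable (\<lambda>n. inverse (fact n) * (K * cmod y) ^ n)" by (rule summable_exp)
    fix n
    show "norm (c n * y ^ n) \<le> inverse (fact n) * (K * cmod y) ^ n"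
      unfolding c_def using K(2)[of n]
      by (auto simp: norm_mult norm_divide norm_power power_mult_distrib divide_simps
               intro!: mult_right_mono)
  qed
  have "((\<lambda>x. \<Sum>n. c n * x^n) has_field_derivative (\<Sum>n. diffs c n * 0^n)) (at 0)"
    by (rule termdiffs_strong_converges_everywhere[OF summ])
  moreover have "(\<Sum>n. diffs c n * 0^n) = Op \<sigma>' \<sigma>"
  proof -
    have "(\<Sum>n. diffs c n * 0^n) = diffs c 0" by (rule powser_zero)
    also have "\<dots> = c 1" by (simp add: diffs_def)
    also have "\<dots> = Op \<sigma>' \<sigma>"
    proof -
      have "(\<Sum>\<tau>\<in>phys_cfgs A d. (if \<sigma>' = \<tau> then 1 else 0) * Op \<tau> \<sigma>)
            = (\<Sum>\<tau>\<in>phys_cfgs A d. if \<sigma>' = \<tau> then Op \<tau> \<sigma> else 0)"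
        by (intro sum.cong) auto
      also have "\<dots> = Op \<sigma>' \<sigma>" using assms by (simp add: phys_cfgs_finite)
      finally show ?thesis by (simp add: c_def op_mult_def op_id_def)
    qed
    finally show ?thesis .
  qed
  ultimately show "((\<lambda>lam. op_exp A d lam Op \<sigma>' \<sigma>) has_field_derivative Op \<sigma>' \<sigma>) (at 0)"
    by (simp add: eq)
  show "op_exp A d 0 Op \<sigma>' \<sigma> = op_id \<sigma>' \<sigma>"
    unfolding eq by (subst powser_zero) (simp add: c_def)
qed




lemma restrict_phys: "s \<in> phys_cfgs V d \<Longrightarrow> A \<subseteq> V \<Longrightarrow> restrict s A \<in> phys_cfgs A d"
  unfolding phys_cfgs_def by (auto simp: PiE_def Pi_def)

lemma contract_deriv:
  assumes "finite V" "A \<subseteq> V"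
  shows "((\<lambda>lam. contract V E D d Aten A (op_exp A d lam Op) M) has_field_derivative
           contract V E D d Aten A Op M) (at 0)"
proof -
  have fA: "finite A" using assms finite_subset by blast
  show ?thesis
    unfolding contract_def
    apply (intro DERIV_sum DERIV_cmult_right DERIV_cmult)
    apply (rule op_exp_deriv(1)[OF fA])
    using restrict_phys assms(2) by blast
qed

lemma prod_ind: "finite S \<Longrightarrow> (\<Prod>v\<in>S. if P v then (1::complex) else 0) = (if \<forall>v\<in>S. P v then 1 else 0)"
  by (induction S rule: finite_induct) auto

lemma mult4_cong: "p * q = p' * q' \<Longrightarrow> a * p * q * r = a * p' * q' * (r::complex)"
  by (metis mult.assoc)

lemma contract_at0:
  assumes "finite V" "A \<subseteq> V"
  shows "contract V E D d Aten A (op_exp A d 0 Op) M = contract V E D d Aten {} one_op M"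
proof -
  have fA: "finite A" using assms finite_subset by blast
  have key: "(\<Prod>v\<in>V - A. if s v = s' v then 1 else 0) * op_exp A d 0 Op (restrict s' A) (restrict s A)
      = (\<Prod>v\<in>V - {}. if s v = s' v then (1::complex) else 0) * one_op (restrict s' {}) (restrict s {})"
    if "s' \<in> phys_cfgs V d" for s s'
  proof -
    have "op_exp A d 0 Op (restrict s' A) (restrict s A) = op_id (restrict s' A) (restrict s A)"
      by (rule op_exp_deriv(2)[OF fA restrict_phys[OF that assms(2)]])
    also have "\<dots> = (if \<forall>v\<in>A. s v = s' v then 1 else 0)"
      unfolding op_id_def by (auto simp: restrict_def fun_eq_iff) metis
    finally show ?thesis using assms
      by (simp add: prod_ind one_op_def) blast
  qed
  show ?thesis unfolding contract_def
    by (intro sum.cong refl mult4_cong key)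
qed




lemma Z_nonneg:
  assumes "finite V"
  shows "\<exists>r\<ge>0. contract V E D d Aten {} one_op ident_mat = complex_of_real r"
proof -
  define H where "H = half_cfgs E D"
  define P where "P = phys_cfgs V d"
  define \<psi> where "\<psi> a s = (\<Prod>v\<in>V. Aten v (s v) (restrict (\<lambda>e. a (v, e)) (inc E v))) *
      (\<Prod>e\<in>E. if a (Min e, e) = a (Max e, e) then (1::complex) else 0)" for a s
  have summand: "(\<Prod>v\<in>V. Aten v (s v) (restrict (\<lambda>e. a (v, e)) (inc E v))
                 * cnj (Aten v (s' v) (restrict (\<lambda>e. b (v, e)) (inc E v))))
      * (\<Prod>v\<in>V - {}. if s v = s' v then 1 else 0)
      * one_op (restrict s' {}) (restrict s {})
      * (\<Prod>e\<in>E. ident_mat e (a (Min e, e), b (Min e, e)) (a (Max e, e), b (Max e, e)))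
      = (if s' = s then \<psi> a s * cnj (\<psi> b s) else 0)" if "s \<in> P" "s' \<in> P" for a b s s'
  proof -
    have eqv: "(\<forall>v\<in>V. s v = s' v) \<longleftrightarrow> s' = s"
      using that unfolding P_def phys_cfgs_def by (auto simp: PiE_def extensional_def fun_eq_iff) metis
    have e1: "(\<Prod>e\<in>E. ident_mat e (a (Min e, e), b (Min e, e)) (a (Max e, e), b (Max e, e)))
       = (\<Prod>e\<in>E. if a (Min e, e) = a (Max e, e) then (1::complex) else 0) *
         cnj (\<Prod>e\<in>E. if b (Min e, e) = b (Max e, e) then (1::complex) else 0)"
      by (simp add: prod.distrib[symmetric] ident_mat_def cnj_prod, intro prod.cong) auto
    have e2: "(\<Prod>v\<in>V. Aten v (s v) (restrict (\<lambda>e. a (v, e)) (inc E v))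
                 * cnj (Aten v (s' v) (restrict (\<lambda>e. b (v, e)) (inc E v))))
       = (\<Prod>v\<in>V. Aten v (s v) (restrict (\<lambda>e. a (v, e)) (inc E v))) *
         cnj (\<Prod>v\<in>V. Aten v (s' v) (restrict (\<lambda>e. b (v, e)) (inc E v)))"
      by (simp add: prod.distrib)
    show ?thesis
      using assms eqv by (simp add: e1 e2 prod_ind one_op_def \<psi>_def)
  qed
  have "contract V E D d Aten {} one_op ident_mat
      = (\<Sum>a\<in>H. \<Sum>b\<in>H. \<Sum>s\<in>P. \<Sum>s'\<in>P. if s' = s then \<psi> a s * cnj (\<psi> b s) else 0)"
    unfolding contract_def H_def[symmetric] P_def[symmetric]
    by (intro sum.cong refl summand)
  also have "\<dots> = (\<Sum>a\<in>H. \<Sum>b\<in>H. \<Sum>s\<in>P. \<psi> a s * cnj (\<psi> b s))"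
    using assms by (simp add: P_def phys_cfgs_finite)
  also have "\<dots> = (\<Sum>s\<in>P. (\<Sum>a\<in>H. \<psi> a s) * cnj (\<Sum>b\<in>H. \<psi> b s))"
    by (simp add: sum_distrib_left sum_distrib_right cnj_sum sum.swap[of _ P], subst sum.swap[of _ H], simp)
  also have "\<dots> = (\<Sum>s\<in>P. complex_of_real ((cmod (\<Sum>a\<in>H. \<psi> a s))^2))"
    by (simp only: complex_norm_square)
  also have "\<dots> = complex_of_real (\<Sum>s\<in>P. (cmod (\<Sum>a\<in>H. \<psi> a s))^2)" by simp
  finally show ?thesis by (intro exI[of _ "\<Sum>s\<in>P. (cmod (\<Sum>a\<in>H. \<psi> a s))^2"]) (auto intro: sum_nonneg)
qed

lemma Z_not_nonpos:
  assumes "finite V" "contract V E D d Aten {} one_op ident_mat \<noteq> 0"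
  shows "contract V E D d Aten {} one_op ident_mat \<notin> \<real>\<^sub>\<le>\<^sub>0"
  using Z_nonneg[OF assms(1), of E D d Aten] assms(2)
  by (auto simp: complex_nonpos_Reals_iff)




lemma swap_sum:
  fixes P1 P2 Q1 Q2 :: "'z \<Rightarrow> complex"
  assumes mixin: "\<And>z w. z \<in> \<Omega> \<Longrightarrow> w \<in> \<Omega> \<Longrightarrow> mix z w \<in> \<Omega>"
    and invol: "\<And>z w. z \<in> \<Omega> \<Longrightarrow> w \<in> \<Omega> \<Longrightarrow> mix (mix z w) (mix w z) = z"
    and P1: "\<And>z w. z \<in> \<Omega> \<Longrightarrow> w \<in> \<Omega> \<Longrightarrow> P1 (mix z w) = P1 z"
    and P2: "\<And>z w. z \<in> \<Omega> \<Longrightarrow> w \<in> \<Omega> \<Longrightarrow> P2 (mix z w) = P2 z"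
    and Q1: "\<And>z w. z \<in> \<Omega> \<Longrightarrow> w \<in> \<Omega> \<Longrightarrow> Q1 (mix z w) = Q1 w"
    and Q2: "\<And>z w. z \<in> \<Omega> \<Longrightarrow> w \<in> \<Omega> \<Longrightarrow> Q2 (mix z w) = Q2 w"
  shows "(\<Sum>z\<in>\<Omega>. P1 z * Q1 z) * (\<Sum>w\<in>\<Omega>. P2 w * Q2 w)
       = (\<Sum>z\<in>\<Omega>. P1 z * Q2 z) * (\<Sum>w\<in>\<Omega>. P2 w * Q1 w)"
proof -
  define \<sigma> where "\<sigma> = (\<lambda>(z, w). (mix z w, mix w z))"
  have bij: "bij_betw \<sigma> (\<Omega> \<times> \<Omega>) (\<Omega> \<times> \<Omega>)"
    by (rule bij_betwI[where g = \<sigma>]) (auto simp: \<sigma>_def mixin invol)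
  have "(\<Sum>z\<in>\<Omega>. P1 z * Q2 z) * (\<Sum>w\<in>\<Omega>. P2 w * Q1 w)
      = (\<Sum>(z, w)\<in>\<Omega> \<times> \<Omega>. P1 z * Q2 z * (P2 w * Q1 w))"
    by (simp add: sum_product sum.cartesian_product)
  also have "\<dots> = (\<Sum>x\<in>\<Omega> \<times> \<Omega>. (\<lambda>(z, w). P1 z * Q2 z * (P2 w * Q1 w)) (\<sigma> x))"
    by (rule sum.reindex_bij_betw[OF bij, symmetric])
  also have "\<dots> = (\<Sum>(z, w)\<in>\<Omega> \<times> \<Omega>. P1 z * Q1 z * (P2 w * Q2 w))"
    by (intro sum.cong refl) (auto simp: \<sigma>_def P1 P2 Q1 Q2)
  also have "\<dots> = (\<Sum>z\<in>\<Omega>. P1 z * Q1 z) * (\<Sum>w\<in>\<Omega>. P2 w * Q2 w)"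
    by (simp add: sum_product sum.cartesian_product)
  finally show ?thesis by simp
qed

definition csum where
  "csum V E d Aten S X M = (\<lambda>(a, b, s, s').
        (\<Prod>v\<in>V. Aten v (s v) (restrict (\<lambda>e. a (v, e)) (inc E v))
                 * cnj (Aten v (s' v) (restrict (\<lambda>e. b (v, e)) (inc E v))))
      * (\<Prod>v\<in>V - S. if s v = s' v then 1 else 0)
      * X (restrict s' S) (restrict s S)
      * (\<Prod>e\<in>E. M e (a (Min e, e), b (Min e, e)) (a (Max e, e), b (Max e, e))))"

lemma contract_as_sum:
  "contract V E D d Aten S X M =
     (\<Sum>z\<in>half_cfgs E D \<times> half_cfgs E D \<times> phys_cfgs V d \<times> phys_cfgs V d. csum V E d Aten S X M z)"
  unfolding contract_def csum_def by (simp add: sum.cartesian_product)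




definition vtx where
  "vtx E Aten v a b s s' = Aten v (s v) (restrict (\<lambda>e. a (v, e)) (inc E v))
                 * cnj (Aten v (s' v) (restrict (\<lambda>e. b (v, e)) (inc E v)))"

definition oth :: "'v::linorder \<Rightarrow> 'v set \<Rightarrow> 'v" where
  "oth v e = (if v = Min e then Max e else Min e)"

definition hf where
  "hf \<mu> a b v e = \<mu> (oth v e) v (a (v, e), b (v, e))"

definition PA where
  "PA E Aten \<mu> A S X = (\<lambda>(a, b, s, s').
     (\<Prod>v\<in>A. vtx E Aten v a b s s') * (\<Prod>v\<in>A - S. if s v = s' v then 1 else 0)
     * X (restrict s' S) (restrict s S)
     * (\<Prod>e\<in>{e\<in>E. e \<inter> A \<noteq> {}}. \<Prod>v\<in>e \<inter> A. hf \<mu> a b v e))"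

definition QA where
  "QA V E D Aten \<mu> A M = (\<lambda>(a, b, s, s').
     (\<Prod>v\<in>V - A. vtx E Aten v a b s s') * (\<Prod>v\<in>V - A. if s v = s' v then 1 else 0)
     * (\<Prod>e\<in>{e\<in>E. e \<inter> A \<noteq> {}}. (\<Prod>v\<in>e - A. hf \<mu> a b v e) / Istar D \<mu> (Min e) (Max e))
     * (\<Prod>e\<in>{e\<in>E. e \<inter> A = {}}. M e (a (Min e, e), b (Min e, e)) (a (Max e, e), b (Max e, e))))"

lemma edge2:
  assumes "card (e::'v::linorder set) = 2"
  shows "e = {Min e, Max e}" "Min e \<noteq> Max e"
proof -
  obtain x y where xy: "x \<noteq> y" "e = {x, y}" using assms unfolding card_2_iff by blast
  have m: "Min e = min x y" "Max e = max x y" unfolding xy(2) by simp_all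
  show "e = {Min e, Max e}" "Min e \<noteq> Max e" unfolding m using xy
    by (cases "x \<le> y"; simp add: min_def max_def insert_commute)+
qed

lemma factor:
  assumes finV: "finite V" and graph: "\<forall>e\<in>E. e \<subseteq> V \<and> card e = 2"
    and SA: "S \<subseteq> A" and AV: "A \<subseteq> V"
    and M: "\<forall>e\<in>E. e \<inter> A \<noteq> {} \<longrightarrow> M e = Pbp D \<mu> e"
  shows "csum V E d Aten S X M z = PA E Aten \<mu> A S X z * QA V E D Aten \<mu> A M z"
proof -
  obtain a b s s' where z: "z = (a, b, s, s')" by (cases z) auto
  have finE: "finite E" using graph finV by (meson Pow_iff finite_Pow_iff rev_finite_subset subsetI)
  have finA: "finite A" using AV finV finite_subset by blast
  define E1 where "E1 = {e\<in>E. e \<inter> A \<noteq> {}}"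
  define E0 where "E0 = {e\<in>E. e \<inter> A = {}}"
  have f1: "(\<Prod>v\<in>V. vtx E Aten v a b s s') = (\<Prod>v\<in>A. vtx E Aten v a b s s') * (\<Prod>v\<in>V - A. vtx E Aten v a b s s')"
    using prod.subset_diff[OF AV finV] by (simp add: mult.commute)
  have f2: "(\<Prod>v\<in>V - S. if s v = s' v then 1 else (0::complex))
     = (\<Prod>v\<in>A - S. if s v = s' v then 1 else 0) * (\<Prod>v\<in>V - A. if s v = s' v then 1 else 0)"
  proof -
    have "V - A \<subseteq> V - S" using SA by blast
    from prod.subset_diff[OF this] finV
    have "(\<Prod>v\<in>V - S. if s v = s' v then 1 else (0::complex))
       = (\<Prod>v\<in>(V - S) - (V - A). if s v = s' v then 1 else 0) * (\<Prod>v\<in>V - A. if s v = s' v then 1 else 0)"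
      by simp
    moreover have "(V - S) - (V - A) = A - S" using AV by blast
    ultimately show ?thesis by simp
  qed
  have f3: "(\<Prod>e\<in>E. M e (a (Min e, e), b (Min e, e)) (a (Max e, e), b (Max e, e)))
     = (\<Prod>e\<in>E1. M e (a (Min e, e), b (Min e, e)) (a (Max e, e), b (Max e, e)))
     * (\<Prod>e\<in>E0. M e (a (Min e, e), b (Min e, e)) (a (Max e, e), b (Max e, e)))"
  proof -
    have "E0 \<subseteq> E" "E - E0 = E1" by (auto simp: E0_def E1_def)
    with prod.subset_diff[OF this(1) finE] show ?thesis by simp
  qed
  have f4: "M e (a (Min e, e), b (Min e, e)) (a (Max e, e), b (Max e, e))
      = (\<Prod>v\<in>e \<inter> A. hf \<mu> a b v e) * ((\<Prod>v\<in>e - A. hf \<mu> a b v e) / Istar D \<mu> (Min e) (Max e))"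
    if "e \<in> E1" for e
  proof -
    have eE: "e \<in> E" "e \<inter> A \<noteq> {}" using that by (auto simp: E1_def)
    have c2: "card e = 2" using graph eE by blast
    have fe: "finite e" using c2 card.infinite by fastforce
    have "(\<Prod>v\<in>e. hf \<mu> a b v e) = hf \<mu> a b (Min e) e * hf \<mu> a b (Max e) e"
    proof -
      have "(\<Prod>v\<in>{Min e, Max e}. hf \<mu> a b v e) = hf \<mu> a b (Min e) e * hf \<mu> a b (Max e) e"
        using edge2(2)[OF c2] by simp
      moreover have "(\<Prod>v\<in>e. hf \<mu> a b v e) = (\<Prod>v\<in>{Min e, Max e}. hf \<mu> a b v e)"
        using edge2(1)[OF c2] by (rule arg_cong)
      ultimately show ?thesis by (rule trans[rotated])
    qed
    moreover have "(\<Prod>v\<in>e. hf \<mu> a b v e) = (\<Prod>v\<in>e \<inter> A. hf \<mu> a b v e) * (\<Prod>v\<in>e - A. hf \<mu> a b v e)"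
      by (rule prod.Int_Diff[OF fe])
    moreover have "M e (a (Min e, e), b (Min e, e)) (a (Max e, e), b (Max e, e))
        = hf \<mu> a b (Min e) e * hf \<mu> a b (Max e) e / Istar D \<mu> (Min e) (Max e)"
      using M eE edge2(2)[OF c2] by (simp add: Pbp_def hf_def oth_def)
    ultimately show ?thesis by simp
  qed
  have f5: "(\<Prod>e\<in>E1. M e (a (Min e, e), b (Min e, e)) (a (Max e, e), b (Max e, e)))
     = (\<Prod>e\<in>E1. \<Prod>v\<in>e \<inter> A. hf \<mu> a b v e) * (\<Prod>e\<in>E1. (\<Prod>v\<in>e - A. hf \<mu> a b v e) / Istar D \<mu> (Min e) (Max e))"
    by (simp only: prod.distrib[symmetric] f4 cong: prod.cong)
  have "csum V E d Aten S X M z =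
     ((\<Prod>v\<in>A. vtx E Aten v a b s s') * (\<Prod>v\<in>V - A. vtx E Aten v a b s s'))
     * ((\<Prod>v\<in>A - S. if s v = s' v then 1 else 0) * (\<Prod>v\<in>V - A. if s v = s' v then 1 else 0))
     * X (restrict s' S) (restrict s S)
     * (((\<Prod>e\<in>E1. \<Prod>v\<in>e \<inter> A. hf \<mu> a b v e) * (\<Prod>e\<in>E1. (\<Prod>v\<in>e - A. hf \<mu> a b v e) / Istar D \<mu> (Min e) (Max e)))
        * (\<Prod>e\<in>E0. M e (a (Min e, e), b (Min e, e)) (a (Max e, e), b (Max e, e))))"
    unfolding z csum_def vtx_def[symmetric] using f1 f2 f3 f5 by (simp only: prod.case vtx_def)
  also have "\<dots> = PA E Aten \<mu> A S X z * QA V E D Aten \<mu> A M z"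
    unfolding z PA_def QA_def E1_def[symmetric] E0_def[symmetric] by (simp add: mult_ac)
  finally show ?thesis .
qed




definition mixh :: "'v set \<Rightarrow> ('v \<times> 'v set \<Rightarrow> nat) \<Rightarrow> ('v \<times> 'v set \<Rightarrow> nat) \<Rightarrow> ('v \<times> 'v set \<Rightarrow> nat)" where
  "mixh A a a2 = (\<lambda>(v, e). if v \<in> A then a (v, e) else a2 (v, e))"

definition mixp :: "'v set \<Rightarrow> ('v \<Rightarrow> nat) \<Rightarrow> ('v \<Rightarrow> nat) \<Rightarrow> ('v \<Rightarrow> nat)" where
  "mixp A s t = (\<lambda>v. if v \<in> A then s v else t v)"

definition mixz where
  "mixz A z w = (case z of (a, b, s, s') \<Rightarrow> case w of (a2, b2, t, t') \<Rightarrow>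
      (mixh A a a2, mixh A b b2, mixp A s t, mixp A s' t'))"

lemma mixz_simp: "mixz A (a, b, s, s') (a2, b2, t, t') = (mixh A a a2, mixh A b b2, mixp A s t, mixp A s' t')"
  by (simp add: mixz_def)

lemma mixz_invol: "mixz A (mixz A z w) (mixz A w z) = z"
  by (cases z; cases w) (auto simp: mixz_simp mixh_def mixp_def fun_eq_iff)

lemma mixh_in: "a \<in> half_cfgs E D \<Longrightarrow> a2 \<in> half_cfgs E D \<Longrightarrow> mixh A a a2 \<in> half_cfgs E D"
  unfolding half_cfgs_def mixh_def by (auto simp: PiE_iff extensional_def)

lemma mixp_in: "s \<in> phys_cfgs V d \<Longrightarrow> t \<in> phys_cfgs V d \<Longrightarrow> mixp A s t \<in> phys_cfgs V d"
  unfolding phys_cfgs_def mixp_def by (auto simp: PiE_iff extensional_def)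

lemma mixz_in: "z \<in> H \<times> H \<times> P \<times> P \<Longrightarrow> w \<in> H \<times> H \<times> P \<times> P \<Longrightarrow> H = half_cfgs E D \<Longrightarrow> P = phys_cfgs V d
   \<Longrightarrow> mixz A z w \<in> H \<times> H \<times> P \<times> P"
  by (cases z; cases w) (auto simp: mixz_simp intro: mixh_in mixp_in)

lemma PA_mix:
  assumes "S \<subseteq> A"
  shows "PA E Aten \<mu> A S X (mixz A z w) = PA E Aten \<mu> A S X z"
proof -
  obtain a b s s' where z: "z = (a, b, s, s')" by (cases z) auto
  obtain a2 b2 t t' where w: "w = (a2, b2, t, t')" by (cases w) auto
  have r1: "restrict (mixp A s t) S = restrict s S" "restrict (mixp A s' t') S = restrict s' S"
    using assms by (auto simp: restrict_def mixp_def fun_eq_iff)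
  have v: "vtx E Aten v (mixh A a a2) (mixh A b b2) (mixp A s t) (mixp A s' t') = vtx E Aten v a b s s'"
    if "v \<in> A" for v
    using that by (simp add: vtx_def mixh_def mixp_def restrict_def)
  have h: "hf \<mu> (mixh A a a2) (mixh A b b2) v e = hf \<mu> a b v e" if "v \<in> A" for v e
    using that by (simp add: hf_def mixh_def)
  have p1: "(\<Prod>v\<in>A. vtx E Aten v (mixh A a a2) (mixh A b b2) (mixp A s t) (mixp A s' t'))
      = (\<Prod>v\<in>A. vtx E Aten v a b s s')" by (intro prod.cong refl v)
  have p2: "(\<Prod>v\<in>A - S. if mixp A s t v = mixp A s' t' v then 1 else (0::complex))
      = (\<Prod>v\<in>A - S. if s v = s' v then 1 else 0)" by (intro prod.cong refl) (auto simp: mixp_def)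
  have p3: "(\<Prod>e\<in>{e\<in>E. e \<inter> A \<noteq> {}}. \<Prod>v\<in>e \<inter> A. hf \<mu> (mixh A a a2) (mixh A b b2) v e)
      = (\<Prod>e\<in>{e\<in>E. e \<inter> A \<noteq> {}}. \<Prod>v\<in>e \<inter> A. hf \<mu> a b v e)" by (intro prod.cong refl h) auto
  show ?thesis unfolding z w mixz_simp PA_def prod.case r1 p1 p2 p3 ..
qed

lemma QA_mix:
  assumes graph: "\<forall>e\<in>E. e \<subseteq> V \<and> card e = 2"
  shows "QA V E D Aten \<mu> A M (mixz A z w) = QA V E D Aten \<mu> A M w"
proof -
  obtain a b s s' where z: "z = (a, b, s, s')" by (cases z) auto
  obtain a2 b2 t t' where w: "w = (a2, b2, t, t')" by (cases w) auto
  have v: "vtx E Aten v (mixh A a a2) (mixh A b b2) (mixp A s t) (mixp A s' t') = vtx E Aten v a2 b2 t t'"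
    if "v \<notin> A" for v
    using that by (simp add: vtx_def mixh_def mixp_def restrict_def)
  have h: "hf \<mu> (mixh A a a2) (mixh A b b2) v e = hf \<mu> a2 b2 v e" if "v \<notin> A" for v e
    using that by (simp add: hf_def mixh_def)
  have mm: "Min e \<notin> A \<and> Max e \<notin> A" if "e \<in> E" "e \<inter> A = {}" for e
  proof -
    have c2: "card e = 2" using graph that by blast
    have "Min e \<in> e" "Max e \<in> e" using edge2(1)[OF c2] by (metis insertI1, metis insertI1 insertI2)
    thus ?thesis using that by blast
  qed
  have e0: "(\<Prod>e\<in>{e\<in>E. e \<inter> A = {}}. M e (mixh A a a2 (Min e, e), mixh A b b2 (Min e, e))
                (mixh A a a2 (Max e, e), mixh A b b2 (Max e, e)))
      = (\<Prod>e\<in>{e\<in>E. e \<inter> A = {}}. M e (a2 (Min e, e), b2 (Min e, e)) (a2 (Max e, e), b2 (Max e, e)))"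
    by (intro prod.cong refl) (use mm in \<open>auto simp: mixh_def\<close>)
  have p1: "(\<Prod>v\<in>V - A. vtx E Aten v (mixh A a a2) (mixh A b b2) (mixp A s t) (mixp A s' t'))
      = (\<Prod>v\<in>V - A. vtx E Aten v a2 b2 t t')" by (intro prod.cong refl v) auto
  have p2: "(\<Prod>v\<in>V - A. if mixp A s t v = mixp A s' t' v then 1 else (0::complex))
      = (\<Prod>v\<in>V - A. if t v = t' v then 1 else 0)" by (intro prod.cong refl) (auto simp: mixp_def)
  have p3: "(\<Prod>e\<in>{e\<in>E. e \<inter> A \<noteq> {}}. (\<Prod>v\<in>e - A. hf \<mu> (mixh A a a2) (mixh A b b2) v e) / Istar D \<mu> (Min e) (Max e))
      = (\<Prod>e\<in>{e\<in>E. e \<inter> A \<noteq> {}}. (\<Prod>v\<in>e - A. hf \<mu> a2 b2 v e) / Istar D \<mu> (Min e) (Max e))"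
    by (intro prod.cong refl arg_cong2[where f="(/)"] h) auto
  show ?thesis unfolding z w mixz_simp QA_def prod.case e0 p1 p2 p3 ..
qed

lemma contract_swap:
  assumes finV: "finite V" and graph: "\<forall>e\<in>E. e \<subseteq> V \<and> card e = 2"
    and S1: "S1 \<subseteq> A" and S2: "S2 \<subseteq> A" and AV: "A \<subseteq> V"
    and M1: "\<forall>e\<in>E. e \<inter> A \<noteq> {} \<longrightarrow> M1 e = Pbp D \<mu> e"
    and M2: "\<forall>e\<in>E. e \<inter> A \<noteq> {} \<longrightarrow> M2 e = Pbp D \<mu> e"
  shows "contract V E D d Aten S1 X1 M1 * contract V E D d Aten S2 X2 M2
       = contract V E D d Aten S1 X1 M2 * contract V E D d Aten S2 X2 M1"
proof -
  define \<Omega> where "\<Omega> = half_cfgs E D \<times> half_cfgs E D \<times> phys_cfgs V d \<times> phys_cfgs V d"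
  have c: "contract V E D d Aten S X M = (\<Sum>z\<in>\<Omega>. PA E Aten \<mu> A S X z * QA V E D Aten \<mu> A M z)"
    if "S \<subseteq> A" "\<forall>e\<in>E. e \<inter> A \<noteq> {} \<longrightarrow> M e = Pbp D \<mu> e" for S X M
    unfolding contract_as_sum \<Omega>_def[symmetric]
    by (intro sum.cong refl factor[OF finV graph that(1) AV that(2)])
  show ?thesis
    unfolding c[OF S1 M1] c[OF S2 M2] c[OF S1 M2] c[OF S2 M1]
    by (rule swap_sum[where mix = "mixz A"])
       (auto simp: \<Omega>_def mixz_invol PA_mix S1 S2 QA_mix[OF graph] intro: mixz_in)
qed


theorem mainTheorem6:
  fixes V :: "'v::linorder set" and E :: "'v set set"
    and D :: "'v set \<Rightarrow> nat" and d :: "'v \<Rightarrow> nat"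
    and Aten :: "'v \<Rightarrow> nat \<Rightarrow> ('v set \<Rightarrow> nat) \<Rightarrow> complex"
    and A :: "'v set"
    and Op :: "('v \<Rightarrow> nat) \<Rightarrow> ('v \<Rightarrow> nat) \<Rightarrow> complex"
    and \<mu> :: "'v \<Rightarrow> 'v \<Rightarrow> nat \<times> nat \<Rightarrow> complex"
  assumes finV: "finite V"
    and graph: "\<forall>e\<in>E. e \<subseteq> V \<and> card e = 2"
    and AV: "A \<subseteq> V"
    and Znz: "contract V E D d Aten {} one_op ident_mat \<noteq> 0"
    and BP: "BP_fixed_point V E D d Aten \<mu>"
    and Inz: "\<forall>v w. {v, w} \<in> E \<longrightarrow> Istar D \<mu> v w \<noteq> 0"
    and ZBPnz: "exc_contract V E D d Aten {} one_op \<mu> {} \<noteq> 0"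
    and expansion: "\<exists>\<epsilon>>0. \<forall>lam. cmod lam < \<epsilon> \<longrightarrow>
          exc_contract V E D d Aten A (op_exp A d lam Op) \<mu> {} \<noteq> 0
        \<and> (\<lambda>W. complex_of_real (ursell W) * cl_weight (Zlam V E D d Aten A Op \<mu> lam) W)
             summable_on conn_clusters E A
        \<and> Ln (contract V E D d Aten A (op_exp A d lam Op) ident_mat)
            = Ln (exc_contract V E D d Aten A (op_exp A d lam Op) \<mu> {})
              + (\<Sum>\<^sub>\<infinity>W\<in>conn_clusters E A.
                   complex_of_real (ursell W) * cl_weight (Zlam V E D d Aten A Op \<mu> lam) W)"
    and termwise:
      "(\<forall>W\<in>conn_clusters E A.
          (\<lambda>lam. complex_of_real (ursell W) * cl_weight (Zlam V E D d Aten A Op \<mu> lam) W)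
            field_differentiable (at 0))
     \<and> (\<lambda>W. deriv (\<lambda>lam. complex_of_real (ursell W) * cl_weight (Zlam V E D d Aten A Op \<mu> lam) W) 0)
          summable_on conn_clusters E A
     \<and> ((\<lambda>lam. \<Sum>\<^sub>\<infinity>W\<in>conn_clusters E A.
             complex_of_real (ursell W) * cl_weight (Zlam V E D d Aten A Op \<mu> lam) W)
          has_field_derivative
          (\<Sum>\<^sub>\<infinity>W\<in>conn_clusters E A.
             deriv (\<lambda>lam. complex_of_real (ursell W) * cl_weight (Zlam V E D d Aten A Op \<mu> lam) W) 0))
         (at 0)"
  shows "((\<lambda>lam. Ln (contract V E D d Aten A (op_exp A d lam Op) ident_mat))
            has_field_derivative
            (contract V E D d Aten A Op ident_mat / contract V E D d Aten {} one_op ident_mat))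
           (at 0)
       \<and> ((\<lambda>W. complex_of_real (ursell W) *
               (\<Sum>l\<in>{l\<in>set_mset W. supp l \<inter> A \<noteq> {}}.
                  of_nat (count W l) *
                  (Zbar V E D d Aten A Op \<mu> l * Zl V E D d Aten \<mu> l ^ (count W l - 1)
                     * (\<Prod>l'\<in>set_mset W - {l}. Zl V E D d Aten \<mu> l' ^ count W l')
                   - cl_weight (Zl V E D d Aten \<mu>) W
                     * (exc_contract V E D d Aten A Op \<mu> {} / exc_contract V E D d Aten {} one_op \<mu> {}))))
          has_sum
            (contract V E D d Aten A Op ident_mat / contract V E D d Aten {} one_op ident_mat
             - exc_contract V E D d Aten A Op \<mu> {} / exc_contract V E D d Aten {} one_op \<mu> {}))
          {W\<in>conn_clusters E A. cl_supp W \<inter> A \<noteq> {}}"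
proof -
  let ?Z = "contract V E D d Aten {} one_op ident_mat"
  let ?ZA = "contract V E D d Aten A Op ident_mat"
  let ?ZBP = "exc_contract V E D d Aten {} one_op \<mu> {}"
  let ?ZBPA = "exc_contract V E D d Aten A Op \<mu> {}"
  let ?N = "\<lambda>lam l. exc_contract V E D d Aten A (op_exp A d lam Op) \<mu> l"
  let ?C = "conn_clusters E A"
  let ?term = "\<lambda>W lam. complex_of_real (ursell W) * cl_weight (Zlam V E D d Aten A Op \<mu> lam) W"
  have dN: "((\<lambda>lam. ?N lam l) has_field_derivative exc_contract V E D d Aten A Op \<mu> l) (at 0)" for l
    unfolding exc_contract_def by (rule contract_deriv[OF finV AV])
  have N0: "?N 0 l = exc_contract V E D d Aten {} one_op \<mu> l" for l
    unfolding exc_contract_def by (rule contract_at0[OF finV AV])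
  have Z0: "contract V E D d Aten A (op_exp A d 0 Op) ident_mat = ?Z"
    by (rule contract_at0[OF finV AV])
  have dZ: "((\<lambda>lam. contract V E D d Aten A (op_exp A d lam Op) ident_mat) has_field_derivative ?ZA) (at 0)"
    by (rule contract_deriv[OF finV AV])
  have part1: "((\<lambda>lam. Ln (contract V E D d Aten A (op_exp A d lam Op) ident_mat)) has_field_derivative
      ?ZA / ?Z) (at 0)"
  proof -
    have "(Ln has_field_derivative inverse ?Z) (at (contract V E D d Aten A (op_exp A d 0 Op) ident_mat))"
      unfolding Z0 by (rule has_field_derivative_Ln[OF Z_not_nonpos[OF finV Znz]])
    from DERIV_chain2[OF this dZ] show ?thesis by (simp add: field_simps)
  qed
  have fac: "exc_contract V E D d Aten A Op \<mu> l * ?ZBP = exc_contract V E D d Aten {} one_op \<mu> l * ?ZBPA"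
    if "supp l \<inter> A = {}" for l
  proof -
    have M1: "\<forall>e\<in>E. e \<inter> A \<noteq> {} \<longrightarrow> exc_mat D \<mu> l e = Pbp D \<mu> e"
      using that by (auto simp: exc_mat_def supp_def)
    have M2: "\<forall>e\<in>E. e \<inter> A \<noteq> {} \<longrightarrow> exc_mat D \<mu> {} e = Pbp D \<mu> e"
      by (auto simp: exc_mat_def)
    show ?thesis unfolding exc_contract_def
      using contract_swap[OF finV graph order_refl[of A] empty_subsetI AV M1 M2, of d Aten Op one_op]
      by (simp add: mult.commute)
  qed
  define r where "r = ?ZBPA / ?ZBP"
  have dZlam: "((\<lambda>lam. Zlam V E D d Aten A Op \<mu> lam l) has_field_derivative
      (Zbar V E D d Aten A Op \<mu> l - Zl V E D d Aten \<mu> l * r)) (at 0)" for l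
  proof -
    have "?N 0 {} \<noteq> 0" using N0 ZBPnz by simp
    from DERIV_divide[OF dN[of l] dN[of "{}"] this]
    show ?thesis unfolding Zlam_def N0 using ZBPnz
      by (simp add: Zbar_def Zl_def r_def field_simps)
  qed
  have Zlam0: "Zlam V E D d Aten A Op \<mu> 0 l = Zl V E D d Aten \<mu> l" for l
    unfolding Zlam_def Zl_def N0 ..
  have dzero: "Zbar V E D d Aten A Op \<mu> l - Zl V E D d Aten \<mu> l * r = 0" if "supp l \<inter> A = {}" for l
    using fac[OF that] ZBPnz by (simp add: Zbar_def Zl_def r_def field_simps)
  define Tv where "Tv W = complex_of_real (ursell W) *
     (\<Sum>l\<in>set_mset W. of_nat (count W l) * ((Zbar V E D d Aten A Op \<mu> l - Zl V E D d Aten \<mu> l * r)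
        * Zl V E D d Aten \<mu> l ^ (count W l - Suc 0)) * (\<Prod>y\<in>set_mset W - {l}. Zl V E D d Aten \<mu> y ^ count W y))" for W
  have dterm: "(?term W has_field_derivative Tv W) (at 0)" for W
  proof -
    have "((\<lambda>lam. \<Prod>l\<in>set_mset W. Zlam V E D d Aten A Op \<mu> lam l ^ count W l) has_field_derivative
      (\<Sum>l\<in>set_mset W. of_nat (count W l) * ((Zbar V E D d Aten A Op \<mu> l - Zl V E D d Aten \<mu> l * r)
        * Zlam V E D d Aten A Op \<mu> 0 l ^ (count W l - Suc 0)) * (\<Prod>y\<in>set_mset W - {l}. Zlam V E D d Aten A Op \<mu> 0 y ^ count W y))) (at 0)"
      by (rule has_field_derivative_prod) (rule DERIV_power[OF dZlam])
    from DERIV_cmult[OF this, of "complex_of_real (ursell W)"]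
    show ?thesis unfolding cl_weight_def Tv_def Zlam0 .
  qed
  define G where "G W = complex_of_real (ursell W) *
               (\<Sum>l\<in>{l\<in>set_mset W. supp l \<inter> A \<noteq> {}}.
                  of_nat (count W l) *
                  (Zbar V E D d Aten A Op \<mu> l * Zl V E D d Aten \<mu> l ^ (count W l - 1)
                     * (\<Prod>l'\<in>set_mset W - {l}. Zl V E D d Aten \<mu> l' ^ count W l')
                   - cl_weight (Zl V E D d Aten \<mu>) W
                     * (exc_contract V E D d Aten A Op \<mu> {} / exc_contract V E D d Aten {} one_op \<mu> {})))" for W
  have TvG: "Tv W = G W" for W
  proof -
    let ?f = "\<lambda>l. of_nat (count W l) * ((Zbar V E D d Aten A Op \<mu> l - Zl V E D d Aten \<mu> l * r)
        * Zl V E D d Aten \<mu> l ^ (count W l - Suc 0)) * (\<Prod>y\<in>set_mset W - {l}. Zl V E D d Aten \<mu> y ^ count W y)"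
    have "(\<Sum>l\<in>set_mset W. ?f l) = (\<Sum>l\<in>{l\<in>set_mset W. supp l \<inter> A \<noteq> {}}. ?f l)"
      by (rule sum.mono_neutral_right) (auto simp: dzero)
    also have "\<dots> = (\<Sum>l\<in>{l\<in>set_mset W. supp l \<inter> A \<noteq> {}}.
                  of_nat (count W l) *
                  (Zbar V E D d Aten A Op \<mu> l * Zl V E D d Aten \<mu> l ^ (count W l - 1)
                     * (\<Prod>l'\<in>set_mset W - {l}. Zl V E D d Aten \<mu> l' ^ count W l')
                   - cl_weight (Zl V E D d Aten \<mu>) W * r))"
    proof (intro sum.cong refl)
      fix l assume "l \<in> {l\<in>set_mset W. supp l \<inter> A \<noteq> {}}"
      hence lW: "l \<in> set_mset W" by simp
      hence c: "count W l = Suc (count W l - 1)" by simp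
      have cw: "cl_weight (Zl V E D d Aten \<mu>) W = Zl V E D d Aten \<mu> l ^ count W l *
          (\<Prod>y\<in>set_mset W - {l}. Zl V E D d Aten \<mu> y ^ count W y)"
        unfolding cl_weight_def using lW by (simp add: prod.remove)
      show "?f l = of_nat (count W l) *
                  (Zbar V E D d Aten A Op \<mu> l * Zl V E D d Aten \<mu> l ^ (count W l - 1)
                     * (\<Prod>l'\<in>set_mset W - {l}. Zl V E D d Aten \<mu> l' ^ count W l')
                   - cl_weight (Zl V E D d Aten \<mu>) W * r)"
        unfolding cw by (subst (3) c) (simp add: algebra_simps)
    qed
    finally show ?thesis unfolding Tv_def G_def r_def by simp
  qed
  have Tv0: "Tv W = 0" if "W \<in> ?C" "cl_supp W \<inter> A = {}" for W
  proof -
    have "supp l \<inter> A = {}" if "l \<in> set_mset W" for l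
      using that \<open>cl_supp W \<inter> A = {}\<close> by (auto simp: cl_supp_def)
    thus ?thesis unfolding Tv_def by (simp add: dzero)
  qed
  have T_eq: "deriv (?term W) 0 = Tv W" for W by (rule DERIV_imp_deriv[OF dterm])
  from termwise have summT: "(\<lambda>W. deriv (?term W) 0) summable_on ?C"
    and dS: "((\<lambda>lam. \<Sum>\<^sub>\<infinity>W\<in>?C. ?term W lam) has_field_derivative (\<Sum>\<^sub>\<infinity>W\<in>?C. deriv (?term W) 0)) (at 0)"
    by blast+
  define \<Sigma> where "\<Sigma> = (\<Sum>\<^sub>\<infinity>W\<in>?C. deriv (?term W) 0)"
  have hsT: "((\<lambda>W. deriv (?term W) 0) has_sum \<Sigma>) ?C" unfolding \<Sigma>_def using summT by simp
  obtain \<epsilon> where \<epsilon>: "\<epsilon> > 0" and exps: "\<And>lam. cmod lam < \<epsilon> \<Longrightarrow>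
          ?N lam {} \<noteq> 0 \<and> Ln (contract V E D d Aten A (op_exp A d lam Op) ident_mat)
            = Ln (?N lam {}) + (\<Sum>\<^sub>\<infinity>W\<in>?C. ?term W lam)"
    using expansion by blast
  have ev: "eventually (\<lambda>lam. cmod lam < \<epsilon>) (nhds (0::complex))"
    using \<epsilon> by (auto simp: eventually_nhds_metric dist_norm)
  have dg: "((\<lambda>lam. Ln (?N lam {})) has_field_derivative ?ZA / ?Z - \<Sigma>) (at 0)"
  proof -
    have "((\<lambda>lam. Ln (contract V E D d Aten A (op_exp A d lam Op) ident_mat) - (\<Sum>\<^sub>\<infinity>W\<in>?C. ?term W lam))
        has_field_derivative ?ZA / ?Z - \<Sigma>) (at 0)"
      unfolding \<Sigma>_def by (rule DERIV_diff[OF part1 dS])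
    moreover have "eventually (\<lambda>lam. Ln (contract V E D d Aten A (op_exp A d lam Op) ident_mat) - (\<Sum>\<^sub>\<infinity>W\<in>?C. ?term W lam)
        = Ln (?N lam {})) (nhds 0)"
      using ev by (rule eventually_mono) (simp add: exps)
    ultimately show ?thesis by (rule DERIV_cong_ev[OF refl _ refl, THEN iffD1, rotated])
  qed
  have "((\<lambda>lam. exp (Ln (?N lam {}))) has_field_derivative exp (Ln (?N 0 {})) * (?ZA / ?Z - \<Sigma>)) (at 0)"
    by (rule DERIV_chain2[OF DERIV_exp dg])
  moreover have "eventually (\<lambda>lam. exp (Ln (?N lam {})) = ?N lam {}) (nhds 0)"
    using ev by (rule eventually_mono) (simp add: exps)
  ultimately have "((\<lambda>lam. ?N lam {}) has_field_derivative exp (Ln (?N 0 {})) * (?ZA / ?Z - \<Sigma>)) (at 0)"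
    by (rule DERIV_cong_ev[OF refl _ refl, THEN iffD1, rotated])
  hence "?ZBPA = exp (Ln (?N 0 {})) * (?ZA / ?Z - \<Sigma>)"
    using DERIV_unique dN by blast
  hence "?ZBPA = ?ZBP * (?ZA / ?Z - \<Sigma>)" using N0 ZBPnz by simp
  hence \<Sigma>val: "\<Sigma> = ?ZA / ?Z - ?ZBPA / ?ZBP" using ZBPnz by (simp add: field_simps)
  have "(G has_sum \<Sigma>) {W\<in>?C. cl_supp W \<inter> A \<noteq> {}}"
  proof -
    have "((\<lambda>W. deriv (?term W) 0) has_sum \<Sigma>) ?C \<longleftrightarrow> (G has_sum \<Sigma>) {W\<in>?C. cl_supp W \<inter> A \<noteq> {}}"
      using Tv0 TvG by (intro has_sum_cong_neutral) (auto simp: T_eq)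
    thus ?thesis using hsT by blast
  qed
  thus ?thesis using part1 unfolding \<Sigma>val G_def by blast
qed

end
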